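(* The identities (A5) $x\wedge(y\wedge z)\approx (y\wedge x)\wedge z$, (J5') $x\approx (x'\wedge y)'\wedge(x'\wedge y')'$ form a 2-base for the variety $\mathbb{BA}$ of Boolean algebras (in the language $\langle\wedge,{}'\rangle$).
   Context: Algebras are of type $\langle \wedge, {}'\rangle$ with $\wedge$ binary and ${}'$ unary. The variety $\mathbb{BA}$ of Boolean algebras in this language consists of the algebras $\langle B,\wedge,{}'\rangle$ obtained from Boolean algebras by keeping only meet and complement (equivalently, the variety generated by the two-element Boolean algebra with meet and complement). A base for a variety is an independent set of identities (no identity in the set follows from the others) that defines the variety; an $n$-base is a base with exactly $n$ identities. *)

theory Defs
  imports Main
begin

definition identity_A5 :: "('a \<Rightarrow> 'a \<Rightarrow> 'a) \<Rightarrow> ('a \<Rightarrow> 'a) \<Rightarrow> bool" where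
  "identity_A5 m c \<longleftrightarrow> (\<forall>x y z. m x (m y z) = m (m y x) z)"

definition identity_J5' :: "('a \<Rightarrow> 'a \<Rightarrow> 'a) \<Rightarrow> ('a \<Rightarrow> 'a) \<Rightarrow> bool" where
  "identity_J5' m c \<longleftrightarrow> (\<forall>x y. x = m (c (m (c x) y)) (c (m (c x) (c y))))"

definition in_BA :: "('a \<Rightarrow> 'a \<Rightarrow> 'a) \<Rightarrow> ('a \<Rightarrow> 'a) \<Rightarrow> bool" where
  "in_BA m c \<longleftrightarrow> (\<exists>j zero one. abstract_boolean_algebra m j c zero one)"

end

theory Submission
  imports Defs
begin

locale AJ =
  fixes m :: "'a \<Rightarrow> 'a \<Rightarrow> 'a" and c :: "'a \<Rightarrow> 'a"
  assumes A: "m x (m y z) = m (m y x) z"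
  and J: "x = m (c (m (c x) y)) (c (m (c x) (c y)))"
begin

lemma comm_5: "m (c (m (c x1) (c x2))) (m (c (m (c x1) x2)) x3) = m x1 x3"
proof -
  have "m (c (m (c x1) (c x2))) (m (c (m (c x1) x2)) x3) = m (m (c (m (c x1) x2)) (c (m (c x1) (c x2)))) x3" by (metis A)
  also have "... = m x1 x3" by (metis J)
  finally show ?thesis .
qed

lemma comm_6: "m (c (m (c x1) (c x2))) x1 = m x1 (c (m (c x1) (c x2)))"
proof -
  have "m (c (m (c x1) (c x2))) x1 = m (c (m (c x1) (c x2))) (m (c (m (c x1) x2)) (c (m (c x1) (c x2))))" by (metis J)
  also have "... = m x1 (c (m (c x1) (c x2)))" by (metis comm_5)
  finally show ?thesis .
qed

lemma comm_7: "m x1 (m x2 (m x3 x4)) = m x1 (m x3 (m x2 x4))"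
proof -
  have "m x1 (m x2 (m x3 x4)) = m (m x2 x1) (m x3 x4)" by (metis A)
  also have "... = m (m x3 (m x2 x1)) x4" by (metis A)
  also have "... = m (m (m x2 x3) x1) x4" by (metis A)
  also have "... = m x1 (m (m x2 x3) x4)" by (metis A)
  also have "... = m x1 (m x3 (m x2 x4))" by (metis A)
  finally show ?thesis .
qed

lemma comm_8: "m (c x1) (m (c x1) x2) = m x2 (m (c x1) (c x1))"
proof -
  have "m (c x1) (m (c x1) x2) = m (c (m (c (m (c x1) x2)) (c (m (c x1) (c x2))))) (m (c x1) x2)" by (metis J)
  also have "... = m (m (c x1) x2) (c (m (c (m (c x1) x2)) (c (m (c x1) (c x2)))))" by (metis comm_6)
  also have "... = m (m (c x1) x2) (c x1)" by (metis J)
  also have "... = m x2 (m (c x1) (c x1))" by (metis A)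
  finally show ?thesis .
qed

lemma comm_9: "m x1 (m x2 (m (c x3) (c x3))) = m (c x3) (m x2 (m (c x3) x1))"
proof -
  have "m x1 (m x2 (m (c x3) (c x3))) = m (m x2 x1) (m (c x3) (c x3))" by (metis A)
  also have "... = m (c x3) (m (c x3) (m x2 x1))" by (metis comm_8)
  also have "... = m (c x3) (m x2 (m (c x3) x1))" by (metis comm_7)
  finally show ?thesis .
qed

lemma comm_10: "m (c x1) (m x2 (m (c x1) x3)) = m x3 (m (c x1) (m x2 (c x1)))"
proof -
  have "m (c x1) (m x2 (m (c x1) x3)) = m x3 (m x2 (m (c x1) (c x1)))" by (metis comm_9)
  also have "... = m x3 (m (c x1) (m x2 (c x1)))" by (metis comm_7)
  finally show ?thesis .
qed

lemma comm_11: "m (c (m (c x1) x2)) (m x3 x1) = m x1 (m x3 (c (m (c x1) x2)))"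
proof -
  have "m (c (m (c x1) x2)) (m x3 x1) = m (c (m (c x1) x2)) (m x3 (m (c (m (c x1) x2)) (c (m (c x1) (c x2)))))" by (metis J)
  also have "... = m (c (m (c x1) (c x2))) (m (c (m (c x1) x2)) (m x3 (c (m (c x1) x2))))" by (metis comm_10)
  also have "... = m x1 (m x3 (c (m (c x1) x2)))" by (metis comm_5)
  finally show ?thesis .
qed

lemma comm_12: "m (c x1) (m (c (m (c (m (c x1) x2)) (m (c x1) (c x2)))) x3) = m x2 (m (c x1) x3)"
proof -
  have "m (c x1) (m (c (m (c (m (c x1) x2)) (m (c x1) (c x2)))) x3) = m (c (m (c (m (c x1) x2)) (c (m (c x1) (c x2))))) (m (c (m (c (m (c x1) x2)) (m (c x1) (c x2)))) x3)" by (metis J)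
  also have "... = m (m (c x1) x2) x3" by (metis comm_5)
  also have "... = m x2 (m (c x1) x3)" by (metis A)
  finally show ?thesis .
qed

lemma comm_13: "m (c x1) (c (m (c (m (c x1) x2)) (c (c (m (c x1) (c x2)))))) = m (c x1) x2"
proof -
  have "m (c x1) (c (m (c (m (c x1) x2)) (c (c (m (c x1) (c x2)))))) = m (c (m (c (m (c x1) x2)) (c (m (c x1) (c x2))))) (c (m (c (m (c x1) x2)) (c (c (m (c x1) (c x2))))))" by (metis J)
  also have "... = m (c x1) x2" by (metis J)
  finally show ?thesis .
qed

lemma comm_15: "m (c (m x1 (m (c x2) x3))) (m x4 x2) = m x2 (m x4 (c (m x1 (m (c x2) x3))))"
proof -
  have "m (c (m x1 (m (c x2) x3))) (m x4 x2) = m (c (m (c x2) (m (c (m (c (m (c x2) x1)) (m (c x2) (c x1)))) x3))) (m x4 x2)" by (metis comm_12)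
  also have "... = m x2 (m x4 (c (m (c x2) (m (c (m (c (m (c x2) x1)) (m (c x2) (c x1)))) x3))))" by (metis comm_11)
  also have "... = m x2 (m x4 (c (m x1 (m (c x2) x3))))" by (metis comm_12)
  finally show ?thesis .
qed

lemma comm_16: "m (c (m (c x1) x2)) (m (c (m (c x1) (m (c (m (c x1) x2)) (c (c (m (c x1) (c x2))))))) x3) = m x1 x3"
proof -
  have "m (c (m (c x1) x2)) (m (c (m (c x1) (m (c (m (c x1) x2)) (c (c (m (c x1) (c x2))))))) x3) = m (c (m (c x1) (c (m (c (m (c x1) x2)) (c (c (m (c x1) (c x2)))))))) (m (c (m (c x1) (m (c (m (c x1) x2)) (c (c (m (c x1) (c x2))))))) x3)" by (metis comm_13)
  also have "... = m x1 x3" by (metis comm_5)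
  finally show ?thesis .
qed

lemma comm_17: "m (c (m (c x1) (m (c (m (c x1) x2)) (c (c (m (c x1) (c x2))))))) (c (m (c x1) x2)) = x1"
proof -
  have "m (c (m (c x1) (m (c (m (c x1) x2)) (c (c (m (c x1) (c x2))))))) (c (m (c x1) x2)) = m (c (m (c x1) (m (c (m (c x1) x2)) (c (c (m (c x1) (c x2))))))) (c (m (c x1) (c (m (c (m (c x1) x2)) (c (c (m (c x1) (c x2))))))))" by (metis comm_13)
  also have "... = x1" by (metis J)
  finally show ?thesis .
qed

lemma comm_19: "m x1 x2 = m x2 x1"
  by (metis comm_15 comm_16 comm_17)

lemma comm: "m x y = m y x"
  by (metis comm_19)

lemma assoc_8: "m x1 (m x2 x3) = m x2 (m x1 x3)"
proof -
  have "m x1 (m x2 x3) = m (m x2 x1) x3" by (metis A)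
  also have "... = m (m x1 x2) x3" by (metis comm)
  also have "... = m x2 (m x1 x3)" by (metis A)
  finally show ?thesis .
qed

lemma assoc: "m (m x y) z = m x (m y z)"
proof -
  have "m (m x y) z = m y (m x z)" by (metis A)
  also have "... = m x (m y z)" by (metis assoc_8)
  finally show ?thesis .
qed

lemma cc_7: "m x1 (m x2 x3) = m x2 (m x1 x3)"
proof -
  have "m x1 (m x2 x3) = m (m x1 x2) x3" by (metis assoc)
  also have "... = m (m x2 x1) x3" by (metis comm)
  also have "... = m x2 (m x1 x3)" by (metis assoc)
  finally show ?thesis .
qed

lemma cc_8: "m (c (m (c x1) x2)) (m (c (m (c x1) (c x2))) x3) = m x1 x3"
proof -
  have "m (c (m (c x1) x2)) (m (c (m (c x1) (c x2))) x3) = m (m (c (m (c x1) x2)) (c (m (c x1) (c x2)))) x3" by (metis assoc)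
  also have "... = m x1 x3" by (metis J)
  finally show ?thesis .
qed

lemma cc_9: "m (c (m (c x1) x2)) (c (m (c x2) (c x1))) = x1"
proof -
  have "m (c (m (c x1) x2)) (c (m (c x2) (c x1))) = m (c (m (c x1) x2)) (c (m (c x1) (c x2)))" by (metis comm)
  also have "... = x1" by (metis J)
  finally show ?thesis .
qed

lemma cc_10: "m (c (m (c x1) x2)) (m x3 (c (m (c x1) (c x2)))) = m x3 x1"
proof -
  have "m (c (m (c x1) x2)) (m x3 (c (m (c x1) (c x2)))) = m x3 (m (c (m (c x1) x2)) (c (m (c x1) (c x2))))" by (metis cc_7)
  also have "... = m x3 x1" by (metis J)
  finally show ?thesis .
qed

lemma cc_11: "m x1 (c (m (c (c x2)) (c x1))) = m x1 (c (m (c x1) x2))"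
proof -
  have "m x1 (c (m (c (c x2)) (c x1))) = m (c (m (c x1) x2)) (m (c (m (c x1) (c x2))) (c (m (c (c x2)) (c x1))))" by (metis cc_8)
  also have "... = m (c (m (c x1) x2)) x1" by (metis cc_9)
  also have "... = m x1 (c (m (c x1) x2))" by (metis comm)
  finally show ?thesis .
qed

lemma cc_12: "m x1 (m x2 x3) = m x3 (m x1 x2)"
proof -
  have "m x1 (m x2 x3) = m (m x1 x2) x3" by (metis assoc)
  also have "... = m x3 (m x1 x2)" by (metis comm)
  finally show ?thesis .
qed

lemma cc_13: "m x1 (m (c (m (c x1) x2)) (c (m (c (c x2)) x1))) = m x1 (c x2)"
proof -
  have "m x1 (m (c (m (c x1) x2)) (c (m (c (c x2)) x1))) = m (c (m (c (c x2)) x1)) (m x1 (c (m (c x1) x2)))" by (metis cc_12)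
  also have "... = m (c (m (c (c x2)) x1)) (m x1 (c (m (c (c x2)) (c x1))))" by (metis cc_11)
  also have "... = m x1 (c x2)" by (metis cc_10)
  finally show ?thesis .
qed

lemma cc_14: "m (c (m x1 (c x2))) (c (m (c x1) (c x2))) = x2"
proof -
  have "m (c (m x1 (c x2))) (c (m (c x1) (c x2))) = m (c (m (c x2) x1)) (c (m (c x1) (c x2)))" by (metis comm)
  also have "... = x2" by (metis cc_9)
  finally show ?thesis .
qed

lemma cc_15: "m (c x1) (c (c x1)) = m x1 (c x1)"
proof -
  have "m (c x1) (c (c x1)) = m (c x1) (m (c (m (c (c x1)) (c x1))) (c (m (c (c (c x1))) (c x1))))" by (metis cc_13)
  also have "... = m (c x1) x1" by (metis cc_14)
  also have "... = m x1 (c x1)" by (metis comm)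
  finally show ?thesis .
qed

lemma cc_17: "m (c (m x1 (c x1))) (c (m x1 (c (c x1)))) = c x1"
proof -
  have "m (c (m x1 (c x1))) (c (m x1 (c (c x1)))) = m (c (m (c x1) (c (c x1)))) (c (m x1 (c (c x1))))" by (metis cc_15)
  also have "... = m (c (m x1 (c (c x1)))) (c (m (c x1) (c (c x1))))" by (metis comm)
  also have "... = c x1" by (metis cc_14)
  finally show ?thesis .
qed

lemma cc_19: "c (c x1) = x1"
proof -
  have "c (c x1) = m (c (m (c x1) (c (c x1)))) (c (m (c x1) (c (c (c x1)))))" by (metis cc_17)
  also have "... = x1" by (metis J)
  finally show ?thesis .
qed

lemma cc: "c (c x) = x"
  by (metis cc_19)

lemma zc_9: "m x1 (m x2 x3) = m x3 (m x1 x2)"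
proof -
  have "m x1 (m x2 x3) = m (m x1 x2) x3" by (metis assoc)
  also have "... = m x3 (m x1 x2)" by (metis comm)
  finally show ?thesis .
qed

lemma zc_10: "m (c (m x1 x2)) (c (m x1 (c x2))) = c x1"
proof -
  have "m (c (m x1 x2)) (c (m x1 (c x2))) = m (c (m x1 x2)) (c (m (c (c x1)) (c x2)))" by (metis cc)
  also have "... = m (c (m (c (c x1)) x2)) (c (m (c (c x1)) (c x2)))" by (metis cc)
  also have "... = c x1" by (metis J)
  finally show ?thesis .
qed

lemma zc_11: "m x1 (m x2 x3) = m x3 (m x2 x1)"
proof -
  have "m x1 (m x2 x3) = m x1 (m x3 x2)" by (metis comm)
  also have "... = m x3 (m x2 x1)" by (metis zc_9)
  finally show ?thesis .
qed

lemma zc_12: "m (c (m x1 x2)) (c (m (c x2) x1)) = c x1"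
proof -
  have "m (c (m x1 x2)) (c (m (c x2) x1)) = m (c (m x1 x2)) (c (m x1 (c x2)))" by (metis comm)
  also have "... = c x1" by (metis zc_10)
  finally show ?thesis .
qed

lemma zc_13: "m (c (m x1 x2)) (m x3 (c (m x1 (c x2)))) = m x3 (c x1)"
proof -
  have "m (c (m x1 x2)) (m x3 (c (m x1 (c x2)))) = m (c (m x1 (c x2))) (m x3 (c (m x1 x2)))" by (metis zc_11)
  also have "... = m x3 (m (c (m x1 x2)) (c (m x1 (c x2))))" by (metis zc_9)
  also have "... = m x3 (c x1)" by (metis zc_10)
  finally show ?thesis .
qed

lemma zc_14: "m (c (m x1 x2)) (c (m (c x1) x2)) = c x2"
proof -
  have "m (c (m x1 x2)) (c (m (c x1) x2)) = m (c (m x2 x1)) (c (m (c x1) x2))" by (metis comm)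
  also have "... = c x2" by (metis zc_12)
  finally show ?thesis .
qed

lemma zc_16: "m (c (m x1 x2)) (m x3 (c (m (c x2) x1))) = m x3 (c x1)"
proof -
  have "m (c (m x1 x2)) (m x3 (c (m (c x2) x1))) = m (c (m (c x2) x1)) (m x3 (c (m x1 x2)))" by (metis zc_11)
  also have "... = m x3 (m (c (m x1 x2)) (c (m (c x2) x1)))" by (metis zc_9)
  also have "... = m x3 (c x1)" by (metis zc_12)
  finally show ?thesis .
qed

lemma zc_17: "m x1 (c (m (c x2) x1)) = m x2 (c (m (c x1) x2))"
proof -
  have "m x1 (c (m (c x2) x1)) = m (c (m (c x2) x1)) x1" by (metis comm)
  also have "... = m (c (m (c x2) x1)) (c (c x1))" by (metis cc)
  also have "... = m (c (m (c x2) x1)) (m (c (m (c x1) x2)) (c (m (c x2) (c x1))))" by (metis zc_12)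
  also have "... = m (c (m (c x1) x2)) (c (c x2))" by (metis zc_13)
  also have "... = m (c (m (c x1) x2)) x2" by (metis cc)
  also have "... = m x2 (c (m (c x1) x2))" by (metis comm)
  finally show ?thesis .
qed

lemma zc_18: "m (c (m x1 x2)) (m x3 (c (m (c x1) x2))) = m x3 (c x2)"
proof -
  have "m (c (m x1 x2)) (m x3 (c (m (c x1) x2))) = m (c (m (c x1) x2)) (m x3 (c (m x1 x2)))" by (metis zc_11)
  also have "... = m x3 (m (c (m x1 x2)) (c (m (c x1) x2)))" by (metis zc_9)
  also have "... = m x3 (c x2)" by (metis zc_14)
  finally show ?thesis .
qed

lemma zc_20: "m x1 (c x1) = m x2 (c x2)"
proof -
  have "m x1 (c x1) = m (c (m x1 x2)) (m x1 (c (m (c x2) x1)))" by (metis zc_16)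
  also have "... = m (c (m x1 x2)) (m x2 (c (m (c x1) x2)))" by (metis zc_17)
  also have "... = m x2 (c x2)" by (metis zc_18)
  finally show ?thesis .
qed

lemma zc: "m x (c x) = m y (c y)"
  by (metis zc_20)

lemma one_10: "m (c (m x1 x2)) (c (m x1 (c x2))) = c x1"
proof -
  have "m (c (m x1 x2)) (c (m x1 (c x2))) = m (c (m x1 x2)) (c (m (c (c x1)) (c x2)))" by (metis cc)
  also have "... = m (c (m (c (c x1)) x2)) (c (m (c (c x1)) (c x2)))" by (metis cc)
  also have "... = c x1" by (metis J)
  finally show ?thesis .
qed

lemma one_11: "m x1 (c x1) = m x2 (m x3 (c (m x2 x3)))"
proof -
  have "m x1 (c x1) = m (m x2 x3) (c (m x2 x3))" by (metis zc)
  also have "... = m x2 (m x3 (c (m x2 x3)))" by (metis assoc)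
  finally show ?thesis .
qed

lemma one_12: "m (c (m x1 x1)) (c (m x2 (c x2))) = c x1"
proof -
  have "m (c (m x1 x1)) (c (m x2 (c x2))) = m (c (m x1 x1)) (c (m x1 (c x1)))" by (metis zc)
  also have "... = c x1" by (metis one_10)
  finally show ?thesis .
qed

lemma one_13: "m x1 (c x1) = m x2 (m x2 (c x2))"
proof -
  have "m x1 (c x1) = m x1 (m x1 (c (m x1 x1)))" by (metis one_11)
  also have "... = m (m x2 (c x2)) (c (m x2 (c x2)))" by (metis one_11)
  also have "... = m (m x2 (m x2 (c (m x2 x2)))) (c (m x2 (c x2)))" by (metis one_11)
  also have "... = m x2 (m (m x2 (c (m x2 x2))) (c (m x2 (c x2))))" by (metis assoc)
  also have "... = m x2 (m x2 (m (c (m x2 x2)) (c (m x2 (c x2)))))" by (metis assoc)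
  also have "... = m x2 (m x2 (c x2))" by (metis one_12)
  finally show ?thesis .
qed

lemma one_15: "m x1 (c x1) = m x2 (m x3 (c x3))"
proof -
  have "m x1 (c x1) = m x2 (m x2 (c x2))" by (metis one_13)
  also have "... = m x2 (m x3 (c x3))" by (metis zc)
  finally show ?thesis .
qed

lemma one_16: "m x1 (c (m x1 (m (c x2) (c (m x1 x2))))) = m x1 x2"
  by (metis one_10 cc comm assoc)

lemma one_17: "m x1 (c x1) = m x2 (m (c x2) x3)"
proof -
  have "m x1 (c x1) = m x3 (m x2 (c x2))" by (metis one_15)
  also have "... = m (m x2 (c x2)) x3" by (metis comm)
  also have "... = m x2 (m (c x2) x3)" by (metis assoc)
  finally show ?thesis .
qed

lemma one_19: "m x1 (c (m x2 (c x2))) = m x1 x1"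
proof -
  have "m x1 (c (m x2 (c x2))) = m x1 (c (m x1 (m (c x1) (c (m x1 x1)))))" by (metis one_17)
  also have "... = m x1 x1" by (metis one_16)
  finally show ?thesis .
qed

lemma one_21: "m (c (m x1 x2)) (m (c (m x1 (c x2))) x3) = m (c x1) x3"
proof -
  have "m (c (m x1 x2)) (m (c (m x1 (c x2))) x3) = m (m (c (m x1 x2)) (c (m x1 (c x2)))) x3" by (metis assoc)
  also have "... = m (c x1) x3" by (metis one_10)
  finally show ?thesis .
qed

lemma one_22: "m x1 x1 = m (c (m x2 (c x2))) x1"
proof -
  have "m x1 x1 = m x1 (c (m x2 (c x2)))" by (metis one_19)
  also have "... = m (c (m x2 (c x2))) x1" by (metis comm)
  finally show ?thesis .
qed

lemma one_24: "m x1 (m x2 x3) = m x3 (m x1 x2)"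
proof -
  have "m x1 (m x2 x3) = m (m x1 x2) x3" by (metis assoc)
  also have "... = m x3 (m x1 x2)" by (metis comm)
  finally show ?thesis .
qed

lemma one_25: "m (c (m x1 x1)) (m x2 x2) = m (c x1) x2"
proof -
  have "m (c (m x1 x1)) (m x2 x2) = m (c (m x1 x1)) (m (c (m x1 (c x1))) x2)" by (metis one_22)
  also have "... = m (c x1) x2" by (metis one_21)
  finally show ?thesis .
qed

lemma one_27: "m x1 (m (c (m x2 x2)) x1) = m (c x2) x1"
proof -
  have "m x1 (m (c (m x2 x2)) x1) = m (c (m x2 x2)) (m x1 x1)" by (metis one_24)
  also have "... = m (c x2) x1" by (metis one_25)
  finally show ?thesis .
qed

lemma one_29: "m x1 (m x2 x3) = m x2 (m x1 x3)"
proof -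
  have "m x1 (m x2 x3) = m (m x1 x2) x3" by (metis assoc)
  also have "... = m (m x2 x1) x3" by (metis comm)
  also have "... = m x2 (m x1 x3)" by (metis assoc)
  finally show ?thesis .
qed

lemma one_30: "m x1 (m x1 (m (c x2) x1)) = m (c x2) (m x1 x1)"
proof -
  have "m x1 (m x1 (m (c x2) x1)) = m x1 (m x1 (m (c (m x2 x2)) (m x1 x1)))" by (metis one_25)
  also have "... = m (m x1 x1) (m (c (m x2 x2)) (m x1 x1))" by (metis assoc)
  also have "... = m (c x2) (m x1 x1)" by (metis one_27)
  finally show ?thesis .
qed

lemma one_32: "m x1 (m x2 x3) = m x3 (m x2 x1)"
proof -
  have "m x1 (m x2 x3) = m x1 (m x3 x2)" by (metis comm)
  also have "... = m x3 (m x2 x1)" by (metis one_24)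
  finally show ?thesis .
qed

lemma one_33: "m x1 (m (c x2) x1) = m (c x2) x1"
proof -
  have "m x1 (m (c x2) x1) = m x1 (m x1 (m (c (m x2 x2)) x1))" by (metis one_27)
  also have "... = m (c (m x2 x2)) (m x1 x1)" by (metis one_30)
  also have "... = m (c x2) x1" by (metis one_25)
  finally show ?thesis .
qed

lemma one_35: "m (c (m x1 x2)) (c (m (c x2) x1)) = c x1"
proof -
  have "m (c (m x1 x2)) (c (m (c x2) x1)) = m (c (m x1 x2)) (c (m x1 (c x2)))" by (metis comm)
  also have "... = c x1" by (metis one_10)
  finally show ?thesis .
qed

lemma one_36: "m x1 (m x2 x1) = m x2 x1"
proof -
  have "m x1 (m x2 x1) = m x1 (m (c (c x2)) x1)" by (metis cc)
  also have "... = m (c (c x2)) x1" by (metis one_33)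
  also have "... = m x2 x1" by (metis cc)
  finally show ?thesis .
qed

lemma one_38: "m (c (m x1 x2)) (c (m (c x1) x2)) = c x2"
proof -
  have "m (c (m x1 x2)) (c (m (c x1) x2)) = m (c (m x2 x1)) (c (m (c x1) x2))" by (metis comm)
  also have "... = c x2" by (metis one_35)
  finally show ?thesis .
qed

lemma one_39: "m x1 (m x2 x2) = m x1 x2"
proof -
  have "m x1 (m x2 x2) = m x2 (m x1 x2)" by (metis one_29)
  also have "... = m x1 x2" by (metis one_36)
  finally show ?thesis .
qed

lemma one_41: "c (m x1 x1) = c x1"
proof -
  have "c (m x1 x1) = m (c (m x1 (m x1 x1))) (c (m (c x1) (m x1 x1)))" by (metis one_38)
  also have "... = m (c (m x1 x1)) (c (m (c x1) (m x1 x1)))" by (metis one_39)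
  also have "... = m (c (m x1 x1)) (c (m (c x1) x1))" by (metis one_39)
  also have "... = c x1" by (metis one_38)
  finally show ?thesis .
qed

lemma one_43: "m x1 x1 = x1"
proof -
  have "m x1 x1 = c (c (m x1 x1))" by (metis cc)
  also have "... = c (c x1)" by (metis one_41)
  also have "... = x1" by (metis cc)
  finally show ?thesis .
qed

lemma one: "m x (c (m y (c y))) = x"
proof -
  have "m x (c (m y (c y))) = m x (c (m x (c x)))" by (metis zc)
  also have "... = m x (c (m x (m (c x) (c x))))" by (metis one_43)
  also have "... = m x (c (m x (m (c x) (c (m x x)))))" by (metis one_43)
  also have "... = m x x" by (metis one_16)
  also have "... = x" by (metis one_43)
  finally show ?thesis .
qed

lemma dist1_9: "c (m (c x1) (c x1)) = x1"
proof -
  have "c (m (c x1) (c x1)) = m (c (m (c x1) (c x1))) (c (m (c x1) (c (c x1))))" by (metis one)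
  also have "... = x1" by (metis J)
  finally show ?thesis .
qed

lemma dist1_11: "c (m x1 x1) = c x1"
proof -
  have "c (m x1 x1) = c (m x1 (c (c x1)))" by (metis cc)
  also have "... = c (m (c (c x1)) (c (c x1)))" by (metis cc)
  also have "... = c x1" by (metis dist1_9)
  finally show ?thesis .
qed

lemma dist1_13: "m x1 x1 = x1"
proof -
  have "m x1 x1 = c (c (m x1 x1))" by (metis cc)
  also have "... = c (c x1)" by (metis dist1_11)
  also have "... = x1" by (metis cc)
  finally show ?thesis .
qed

lemma dist1_14: "m x1 (m x1 x2) = m x1 x2"
proof -
  have "m x1 (m x1 x2) = m (m x1 x1) x2" by (metis assoc)
  also have "... = m x1 x2" by (metis dist1_13)
  finally show ?thesis .
qed

lemma dist1_16: "m x1 (c (m (c x1) x2)) = x1"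
proof -
  have "m x1 (c (m (c x1) x2)) = m (c (m (c x1) x2)) x1" by (metis comm)
  also have "... = m (c (m (c x1) x2)) (m (c (m (c x1) x2)) (c (m (c x1) (c x2))))" by (metis J)
  also have "... = m (c (m (c x1) x2)) (c (m (c x1) (c x2)))" by (metis dist1_14)
  also have "... = x1" by (metis J)
  finally show ?thesis .
qed

lemma dist1_17: "m x1 (m x2 x1) = m x2 x1"
proof -
  have "m x1 (m x2 x1) = m x1 (m x1 x2)" by (metis comm)
  also have "... = m x1 x2" by (metis dist1_14)
  also have "... = m x2 x1" by (metis comm)
  finally show ?thesis .
qed

lemma dist1_19: "m x1 (c (m x2 (c x1))) = x1"
proof -
  have "m x1 (c (m x2 (c x1))) = m x1 (c (m (c x1) (m x2 (c x1))))" by (metis dist1_17)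
  also have "... = x1" by (metis dist1_16)
  finally show ?thesis .
qed

lemma dist1_20: "m x1 (m x2 (c x2)) = m x2 (c x2)"
proof -
  have "m x1 (m x2 (c x2)) = m x1 (m x1 (c x1))" by (metis zc)
  also have "... = m x1 (c x1)" by (metis dist1_14)
  also have "... = m x2 (c x2)" by (metis zc)
  finally show ?thesis .
qed

lemma dist1_21: "m x1 (m (c (m x2 (c x1))) x3) = m x1 x3"
proof -
  have "m x1 (m (c (m x2 (c x1))) x3) = m (m x1 (c (m x2 (c x1)))) x3" by (metis assoc)
  also have "... = m x1 x3" by (metis dist1_19)
  finally show ?thesis .
qed

lemma dist1_22: "m x1 (m (c x1) x2) = m x1 (c x1)"
proof -
  have "m x1 (m (c x1) x2) = m (m x1 (c x1)) x2" by (metis assoc)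
  also have "... = m x2 (m x1 (c x1))" by (metis comm)
  also have "... = m x1 (c x1)" by (metis dist1_20)
  finally show ?thesis .
qed

lemma dist1_23: "m (c x1) (c (m x2 x1)) = c x1"
proof -
  have "m (c x1) (c (m x2 x1)) = m (c x1) (c (m x2 (c (c x1))))" by (metis cc)
  also have "... = c x1" by (metis dist1_19)
  finally show ?thesis .
qed

lemma dist1_24: "m x1 (c (m (c x2) x1)) = m x1 x2"
proof -
  have "m x1 (c (m (c x2) x1)) = m x1 (m (c (m (c x2) (c x1))) (c (m (c x2) x1)))" by (metis dist1_21)
  also have "... = m x1 (m (c (m (c x2) (c x1))) (c (m (c x2) (c (c x1)))))" by (metis cc)
  also have "... = m x1 x2" by (metis J)
  finally show ?thesis .
qed

lemma dist1_25: "m x1 (m x2 (c x1)) = m x1 (c x1)"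
proof -
  have "m x1 (m x2 (c x1)) = m x1 (m (c x1) (m x2 (c x1)))" by (metis dist1_17)
  also have "... = m x1 (c x1)" by (metis dist1_22)
  finally show ?thesis .
qed

lemma dist1_26: "m (c x1) (c (m x1 x2)) = c x1"
proof -
  have "m (c x1) (c (m x1 x2)) = m (c x1) (c (m (c (c x1)) x2))" by (metis cc)
  also have "... = c x1" by (metis dist1_16)
  finally show ?thesis .
qed

lemma dist1_27: "m (c x1) (m (c (m x2 x1)) x3) = m (c x1) x3"
proof -
  have "m (c x1) (m (c (m x2 x1)) x3) = m (m (c x1) (c (m x2 x1))) x3" by (metis assoc)
  also have "... = m (c x1) x3" by (metis dist1_23)
  finally show ?thesis .
qed

lemma dist1_28: "m x1 (c (m x2 x1)) = m x1 (c x2)"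
proof -
  have "m x1 (c (m x2 x1)) = m x1 (c (m (c (c x2)) x1))" by (metis cc)
  also have "... = m x1 (c x2)" by (metis dist1_24)
  finally show ?thesis .
qed

lemma dist1_29: "m x1 (m x2 x3) = m x2 (m x1 x3)"
proof -
  have "m x1 (m x2 x3) = m (m x1 x2) x3" by (metis assoc)
  also have "... = m (m x2 x1) x3" by (metis comm)
  also have "... = m x2 (m x1 x3)" by (metis assoc)
  finally show ?thesis .
qed

lemma dist1_30: "m x1 (m x2 (c (m x1 x2))) = m x1 (c x1)"
proof -
  have "m x1 (m x2 (c (m x1 x2))) = m (m x1 x2) (c (m x1 x2))" by (metis assoc)
  also have "... = m (m x1 x2) (m (c x1) (c (m x1 x2)))" by (metis dist1_25)
  also have "... = m x1 (m x2 (m (c x1) (c (m x1 x2))))" by (metis assoc)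
  also have "... = m x1 (m x2 (c x1))" by (metis dist1_26)
  also have "... = m x1 (c x1)" by (metis dist1_25)
  finally show ?thesis .
qed

lemma dist1_31: "m (c x1) (c (m x2 (c (m x3 x1)))) = m (c x1) (c x2)"
proof -
  have "m (c x1) (c (m x2 (c (m x3 x1)))) = m (c x1) (m (c (m x3 x1)) (c (m x2 (c (m x3 x1)))))" by (metis dist1_27)
  also have "... = m (c x1) (m (c (m x3 x1)) (c x2))" by (metis dist1_28)
  also have "... = m (c x1) (c x2)" by (metis dist1_27)
  finally show ?thesis .
qed

lemma dist1_32: "m x1 (c (m x2 (m x3 x1))) = m x1 (c (m x2 x3))"
proof -
  have "m x1 (c (m x2 (m x3 x1))) = m x1 (c (m (m x2 x3) x1))" by (metis assoc)
  also have "... = m x1 (c (m x2 x3))" by (metis dist1_28)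
  finally show ?thesis .
qed

lemma dist1_33: "m x1 (m x2 (c (m x2 x1))) = m x2 (c x2)"
proof -
  have "m x1 (m x2 (c (m x2 x1))) = m x2 (m x1 (c (m x2 x1)))" by (metis dist1_29)
  also have "... = m x2 (c x2)" by (metis dist1_30)
  finally show ?thesis .
qed

lemma dist1_34: "m (c (m x1 x2)) (c (m x2 (c (m x3 x1)))) = c x2"
proof -
  have "m (c (m x1 x2)) (c (m x2 (c (m x3 x1)))) = m (c (m x1 x2)) (c (m x2 (c (m x3 (m x1 x2)))))" by (metis dist1_32)
  also have "... = m (c (m x1 x2)) (c x2)" by (metis dist1_31)
  also have "... = m (c x2) (c (m x1 x2))" by (metis comm)
  also have "... = c x2" by (metis dist1_23)
  finally show ?thesis .
qed

lemma dist1_35: "m (c (m (c x1) x2)) (m (c (m (c x1) (c x2))) x3) = m x1 x3"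
proof -
  have "m (c (m (c x1) x2)) (m (c (m (c x1) (c x2))) x3) = m (m (c (m (c x1) x2)) (c (m (c x1) (c x2)))) x3" by (metis assoc)
  also have "... = m x1 x3" by (metis J)
  finally show ?thesis .
qed

lemma dist1_36: "m x1 (c (m x1 x2)) = m x1 (c x2)"
proof -
  have "m x1 (c (m x1 x2)) = m x1 (c (m x2 x1))" by (metis comm)
  also have "... = m x1 (c x2)" by (metis dist1_28)
  finally show ?thesis .
qed

lemma dist1_37: "m x1 (m x2 x3) = m x3 (m x1 x2)"
proof -
  have "m x1 (m x2 x3) = m (m x1 x2) x3" by (metis assoc)
  also have "... = m x3 (m x1 x2)" by (metis comm)
  finally show ?thesis .
qed

lemma dist1_38: "m (c (m x1 x2)) (c (m (c (m x3 x2)) x1)) = c x1"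
proof -
  have "m (c (m x1 x2)) (c (m (c (m x3 x2)) x1)) = m (c (m x1 x2)) (c (m x1 (c (m x3 x2))))" by (metis comm)
  also have "... = m (c (m x2 x1)) (c (m x1 (c (m x3 x2))))" by (metis comm)
  also have "... = c x1" by (metis dist1_34)
  finally show ?thesis .
qed

lemma dist1_39: "m (c (m x1 x2)) (m (c (m x1 (c x2))) x3) = m (c x1) x3"
proof -
  have "m (c (m x1 x2)) (m (c (m x1 (c x2))) x3) = m (c (m x1 x2)) (m (c (m (c (c x1)) (c x2))) x3)" by (metis cc)
  also have "... = m (c (m (c (c x1)) x2)) (m (c (m (c (c x1)) (c x2))) x3)" by (metis cc)
  also have "... = m (c x1) x3" by (metis dist1_35)
  finally show ?thesis .
qed

lemma dist1_40: "m x1 (m x2 (c (m x1 x3))) = m x2 (m x1 (c x3))"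
proof -
  have "m x1 (m x2 (c (m x1 x3))) = m x2 (m x1 (c (m x1 x3)))" by (metis dist1_29)
  also have "... = m x2 (m x1 (c x3))" by (metis dist1_36)
  finally show ?thesis .
qed

lemma dist1_41: "m x1 (c (m x2 (m x1 x3))) = m x1 (c (m x3 x2))"
proof -
  have "m x1 (c (m x2 (m x1 x3))) = m x1 (c (m x1 (m x3 x2)))" by (metis dist1_37)
  also have "... = m x1 (c (m x3 x2))" by (metis dist1_36)
  finally show ?thesis .
qed

lemma dist1_42: "m (c (m x1 x2)) (c (m (c x3) x2)) = c (m (c (m x3 (c x1))) x2)"
proof -
  have "m (c (m x1 x2)) (c (m (c x3) x2)) = m (c (m x1 (m (c (m x3 (c x1))) x2))) (c (m (c x3) x2))" by (metis dist1_21)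
  also have "... = m (c (m x1 (m (c (m x3 (c x1))) x2))) (c (m (c (m x3 x1)) (m (c (m x3 (c x1))) x2)))" by (metis dist1_39)
  also have "... = m (c (m (c (m x3 (c x1))) (m x2 x1))) (c (m (c (m x3 x1)) (m (c (m x3 (c x1))) x2)))" by (metis dist1_37)
  also have "... = m (c (m (m (c (m x3 (c x1))) x2) x1)) (c (m (c (m x3 x1)) (m (c (m x3 (c x1))) x2)))" by (metis assoc)
  also have "... = c (m (c (m x3 (c x1))) x2)" by (metis dist1_38)
  finally show ?thesis .
qed

lemma dist1_43: "m x1 (c (m x2 (c (m x1 x3)))) = m x1 (c (m (c x3) x2))"
proof -
  have "m x1 (c (m x2 (c (m x1 x3)))) = m x1 (c (m x1 (m x2 (c (m x1 x3)))))" by (metis dist1_36)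
  also have "... = m x1 (c (m x2 (m x1 (c x3))))" by (metis dist1_40)
  also have "... = m x1 (c (m (c x3) x2))" by (metis dist1_41)
  finally show ?thesis .
qed

lemma dist1_45: "c (m (c (m x1 x2)) (c (m x2 x3))) = m x2 (c (m (c x3) (c x1)))"
proof -
  have "c (m (c (m x1 x2)) (c (m x2 x3))) = c (m (c (m x1 (c (c x2)))) (c (m x2 x3)))" by (metis cc)
  also have "... = m (c (m (c x2) (c (m x2 x3)))) (c (m (c x1) (c (m x2 x3))))" by (metis dist1_42)
  also have "... = m (c (c x2)) (c (m (c x1) (c (m x2 x3))))" by (metis dist1_26)
  also have "... = m x2 (c (m (c x1) (c (m x2 x3))))" by (metis cc)
  also have "... = m x2 (c (m (c x3) (c x1)))" by (metis dist1_43)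
  finally show ?thesis .
qed

lemma dist1_47: "c (m (c (m x1 x2)) (c (m x1 x3))) = m x1 (c (m (c x3) (c x2)))"
proof -
  have "c (m (c (m x1 x2)) (c (m x1 x3))) = c (m (c (m x2 x1)) (c (m x1 x3)))" by (metis comm)
  also have "... = m x1 (c (m (c x3) (c x2)))" by (metis dist1_45)
  finally show ?thesis .
qed

lemma dist1: "m x (c (m (c y) (c z))) = c (m (c (m x y)) (c (m x z)))"
proof -
  have "m x (c (m (c y) (c z))) = m x (c (m (c z) (c y)))" by (metis comm)
  also have "... = c (m (c (m x y)) (c (m x z)))" by (metis dist1_47)
  finally show ?thesis .
qed

lemma dist2_7: "c (m x1 (c (m (c x2) (c x3)))) = m (c (m x1 x2)) (c (m x1 x3))"
proof -
  have "c (m x1 (c (m (c x2) (c x3)))) = c (c (m (c (m x1 x2)) (c (m x1 x3))))" by (metis dist1)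
  also have "... = m (c (m x1 x2)) (c (m x1 x3))" by (metis cc)
  finally show ?thesis .
qed

lemma dist2: "c (m (c x) (c (m y z))) = m (c (m (c x) (c y))) (c (m (c x) (c z)))"
proof -
  have "c (m (c x) (c (m y z))) = c (m (c x) (c (m (c (c y)) z)))" by (metis cc)
  also have "... = c (m (c x) (c (m (c (c y)) (c (c z)))))" by (metis cc)
  also have "... = m (c (m (c x) (c y))) (c (m (c x) (c z)))" by (metis dist2_7)
  finally show ?thesis .
qed

lemma BA: "abstract_boolean_algebra m (\<lambda>x y. c (m (c x) (c y))) c
   (m undefined (c undefined)) (c (m undefined (c undefined)))"
proof (unfold_locales)
  fix x y z
  show "m (m x y) z = m x (m y z)" by (rule assoc)
  show "m x y = m y x" by (rule comm)
  show "c (m (c (c (m (c x) (c y)))) (c z)) = c (m (c x) (c (c (m (c y) (c z)))))"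
    by (simp add: cc assoc)
  show "c (m (c x) (c y)) = c (m (c y) (c x))" by (simp add: comm)
  show "m x (c (m (c y) (c z))) = c (m (c (m x y)) (c (m x z)))" by (rule dist1)
  show "c (m (c x) (c (m y z))) = m (c (m (c x) (c y))) (c (m (c x) (c z)))" by (rule dist2)
  show "m x (c (m undefined (c undefined))) = x" by (rule one)
  show "c (m (c x) (c (m undefined (c undefined)))) = x" by (simp add: one cc)
  show "m x (c x) = m undefined (c undefined)" by (rule zc)
  show "c (m (c x) (c (c x))) = c (m undefined (c undefined))"
    by (metis cc zc)
qed

end

lemma BA_J:
  assumes "abstract_boolean_algebra m j c z u"
  shows "x = m (c (m (c x) y)) (c (m (c x) (c y)))"
proof -
  interpret abstract_boolean_algebra m j c z u by (rule assms)
  have "m (c (m (c x) y)) (c (m (c x) (c y))) = m (j x (c y)) (j x y)" by simp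
  also have "... = j x (m (c y) y)" by (simp only: disj_conj_distrib)
  also have "... = x" by simp
  finally show ?thesis by simp
qed

lemma BA_A:
  assumes "abstract_boolean_algebra m j c z u"
  shows "m x (m y w) = m (m y x) w"
proof -
  interpret abstract_boolean_algebra m j c z u by (rule assms)
  show ?thesis by (simp add: conj.assoc conj.commute conj.left_commute)
qed

theorem theorem6p1:
  shows "(\<forall>(m :: 'a \<Rightarrow> 'a \<Rightarrow> 'a) c. (identity_A5 m c \<and> identity_J5' m c) \<longleftrightarrow> in_BA m c)
    \<and> (\<exists>(m :: nat \<Rightarrow> nat \<Rightarrow> nat) c. identity_A5 m c \<and> \<not> identity_J5' m c)
    \<and> (\<exists>(m :: nat \<Rightarrow> nat \<Rightarrow> nat) c. identity_J5' m c \<and> \<not> identity_A5 m c)"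
proof (intro conjI allI)
  fix m :: "'a \<Rightarrow> 'a \<Rightarrow> 'a" and c
  show "(identity_A5 m c \<and> identity_J5' m c) \<longleftrightarrow> in_BA m c"
  proof
  assume "identity_A5 m c \<and> identity_J5' m c"
  then interpret AJ m c
    by unfold_locales (auto simp: identity_A5_def identity_J5'_def)
  show "in_BA m c" unfolding in_BA_def using BA by blast
next
  assume "in_BA m c"
  then obtain j z u where h: "abstract_boolean_algebra m j c z u"
    unfolding in_BA_def by blast
  show "identity_A5 m c \<and> identity_J5' m c"
    unfolding identity_A5_def identity_J5'_def
    using BA_A[OF h] BA_J[OF h] by blast
  qed
next
  show "\<exists>(m :: nat \<Rightarrow> nat \<Rightarrow> nat) c. identity_A5 m c \<and> \<not> identity_J5' m c"
    by (rule exI[of _ "\<lambda>x y. 0"], rule exI[of _ "\<lambda>x. 0"])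
       (auto simp: identity_A5_def identity_J5'_def)
next
  show "\<exists>(m :: nat \<Rightarrow> nat \<Rightarrow> nat) c. identity_J5' m c \<and> \<not> identity_A5 m c"
    by (rule exI[of _ "\<lambda>x y. x"], rule exI[of _ "\<lambda>x. x"])
       (auto simp: identity_A5_def identity_J5'_def)
qed

end
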